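(* Let $\gamma\in[0,1]$, $\rho\in[0,1)$, and let $k:\mathbb{R}^3\times\mathbb{R}^3\to\mathbb{R}$ satisfy $$|k(v,v_* )|\lesssim\frac{1}{|v-v_*|(1+|v|+|v_*|)^{1-\gamma}}\exp\!\Big(-\frac{1-\rho}{4}\Big(|v-v_*|^2+\Big(\frac{|v|^2-|v_*|^2}{|v-v_*|}\Big)^2\Big)\Big).$$ Then for $0\le\alpha<(1-\rho)/2$, $$\int_{\mathbb{R}^3}\frac{1+|v_*|}{|v_*|}|k(v,v_* )|e^{-\alpha|v_*|^2}dv_*\lesssim e^{-\alpha|v|^2}\quad\text{for all }v\in\mathbb{R}^3.$$
   Context: $a\lesssim b$ means $a\le Cb$ for a constant $C\ge0$ independent of $v$. *)

theory Defs
  imports "HOL-Analysis.Analysis"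
begin

end

theory Submission
  imports Defs
begin

definition Qf :: "real \<Rightarrow> real" where
  "Qf t = (if t = 0 then 0 else if t < 1 then 1 / t^2 else 1 / t^4)"

lemma Qf_nonneg: "t \<ge> 0 \<Longrightarrow> Qf t \<ge> 0"
  by (simp add: Qf_def)

lemma dyadic_big: "1 \<le> (t::real) \<Longrightarrow> t < 2^N \<Longrightarrow> \<exists>n. 2^n \<le> t \<and> t < 2^(n+1)"
proof (induction N)
  case 0 then show ?case by simp
next
  case (Suc N)
  then show ?case
  proof (cases "t < 2^N")
    case True with Suc show ?thesis by blast
  next
    case False with Suc show ?thesis by (intro exI[of _ N]) auto
  qed
qed

lemma dyadic_big': "1 \<le> (t::real) \<Longrightarrow> \<exists>n. 2^n \<le> t \<and> t < 2^(n+1)"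
proof -
  assume "1 \<le> t"
  obtain N where "t < 2^N" using real_arch_pow[of 2 t] by auto
  then show ?thesis using dyadic_big \<open>1 \<le> t\<close> by blast
qed

lemma Qf_le_sum:
  fixes w c :: "'a::euclidean_space"
  shows "ennreal (Qf (norm (w - c))) \<le> (\<Sum>n. ennreal (4^(n+1)) * indicator (cball c (1/2^n)) w
            + ennreal (1/16^n) * indicator (cball c (2^(n+1))) w)"
proof -
  define t where "t = norm (w - c)"
  have dt: "dist c w = t" by (simp add: t_def dist_norm norm_minus_commute)
  let ?f = "\<lambda>n. ennreal (4^(n+1)) * indicator (cball c (1/2^n)) w
            + ennreal (1/16^n) * indicator (cball c (2^(n+1))) w"
  have up: "?f n \<le> (\<Sum>n. ?f n)" for n
    using sum_le_suminf[of ?f "{n}"] by (simp add: summableI)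
  consider "t = 0" | "0 < t" "t < 1" | "1 \<le> t" using norm_ge_zero t_def by fastforce
  then show ?thesis
  proof cases
    case 1 then show ?thesis by (simp add: t_def[symmetric] Qf_def)
  next
    case 2
    then obtain n where n: "2^n \<le> 1/t" "1/t < 2^(n+1)" using dyadic_big'[of "1/t"] by auto
    have "t \<le> 1/2^n" using n 2 by (simp add: field_simps)
    then have ind: "indicator (cball c (1/2^n)) w = (1::ennreal)" using dt by (simp add: indicator_def)
    have "1/t^2 = (1/t)^2" by (simp add: power_divide)
    also have "\<dots> \<le> (2^(n+1))^2" using n 2 by (intro power_mono) auto
    also have "\<dots> = 4^(n+1)" by (simp add: power_mult_distrib[symmetric] power2_eq_square)
    finally have "Qf t \<le> 4^(n+1)" using 2 by (simp add: Qf_def)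
    then have "ennreal (Qf t) \<le> ?f n" using ind
      by (simp add: ennreal_leI add_increasing2)
    then show ?thesis using up[of n] t_def by simp
  next
    case 3
    then obtain n where n: "2^n \<le> t" "t < 2^(n+1)" using dyadic_big' by auto
    have ind: "indicator (cball c (2^(n+1))) w = (1::ennreal)" using dt n by (simp add: indicator_def)
    have "((2::real)^n) ^4 \<le> t^4" using n by (intro power_mono) auto
    have t0: "0 < t" using 3 by simp
    have "inverse (t^4) \<le> inverse (((2::real)^n)^4)"
      by (rule le_imp_inverse_le[OF \<open>((2::real)^n) ^4 \<le> t^4\<close>]) simp
    then have "1/t^4 \<le> 1/ (2^n)^4" by (simp add: inverse_eq_divide)
    also have "((2::real)^n)^4 = 16^n" by (simp add: power_mult_distrib[symmetric] power4_eq_xxxx)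
    finally have "Qf t \<le> 1/16^n" using 3 by (simp add: Qf_def)
    then have "ennreal (Qf t) \<le> ?f n" using ind
      by (simp add: ennreal_leI add_increasing)
    then show ?thesis using up[of n] t_def by simp
  qed
qed

lemma Qf_int:
  fixes c :: "real^3"
  shows "(\<integral>\<^sup>+ w. ennreal (Qf (norm (w - c))) \<partial>lborel) \<le> ennreal (24 * unit_ball_vol 3)"
proof -
  define U where "U = unit_ball_vol 3"
  have U0: "U \<ge> 0" unfolding U_def by simp
  let ?f = "\<lambda>n w. ennreal (4^(n+1)) * indicator (cball c (1/2^n)) w
            + ennreal (1/16^n) * indicator (cball c (2^(n+1))) w"
  have "(\<integral>\<^sup>+ w. ennreal (Qf (norm (w - c))) \<partial>lborel) \<le> (\<integral>\<^sup>+ w. (\<Sum>n. ?f n w) \<partial>lborel)"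
    by (rule nn_integral_mono) (rule Qf_le_sum)
  also have "\<dots> = (\<Sum>n. \<integral>\<^sup>+ w. ?f n w \<partial>lborel)"
    by (rule nn_integral_suminf) (intro borel_measurable_add borel_measurable_times_ennreal borel_measurable_indicator borel_measurable_const; simp)
  also have "\<dots> = (\<Sum>n. ennreal (12 * U * (1/2)^n))"
  proof (rule suminf_cong)
    fix n
    have m1: "(\<lambda>w. ennreal a * indicator (cball c r) w) \<in> borel_measurable lborel" for a r
      by (intro borel_measurable_times_ennreal borel_measurable_indicator borel_measurable_const) simp
    have "(\<integral>\<^sup>+ w. ?f n w \<partial>lborel) = ennreal (4^(n+1)) * emeasure lborel (cball c (1/2^n))
       + ennreal (1/16^n) * emeasure lborel (cball c (2^(n+1)))"
      by (subst nn_integral_add[OF m1 m1]) (simp_all add: nn_integral_cmult_indicator)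
    also have "\<dots> = ennreal (4^(n+1) * (U * (1/2^n)^3) + 1/16^n * (U * (2^(n+1))^3))"
    proof -
      have e: "emeasure lborel (cball c r) = ennreal (U * r^3)" if "0 \<le> r" for r
        using emeasure_cball[OF that, of c] by (simp add: U_def)
      have p1: "0 \<le> U * (1/2^n)^3" "0 \<le> U * (2^(n+1))^3" using U0 by simp_all
      have p2: "0 \<le> 1/(16::real)^n" "0 \<le> (4::real)^(n+1)" by simp_all
      show ?thesis apply (subst (1 2) e) apply simp apply simp
        by (metis ennreal_mult ennreal_plus p1 p2 mult_nonneg_nonneg)
    qed
    also have "4^(n+1) * (U * (1/2^n)^3) + 1/16^n * (U * (2^(n+1))^3) = 12 * U * (1/2::real)^n"
    proof -
      have h4: "(4::real)^n = (2^n)^2" by (simp add: power_mult_distrib[symmetric] power2_eq_square)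
      have h16: "(16::real)^n = (2^n)^4"
      proof -
        have "((2::real)^n)^4 = ((2^n)^2)^2" by simp
        also have "\<dots> = (4^n)^2" by (simp add: h4)
        also have "\<dots> = 16^n" by (simp add: power_mult_distrib[symmetric] power2_eq_square)
        finally show ?thesis by simp
      qed
      have pos: "(0::real) < 2^n" by simp
      have a: "(4::real)^(n+1) * (1/2^n)^3 = 4 * (1/2)^n"
        using pos by (simp add: h4 power_divide field_simps power2_eq_square power3_eq_cube)
      have b: "(1/16^n) * (2^(n+1))^3 = 8 * (1/2::real)^n"
        using pos by (simp add: h16 power_divide field_simps power3_eq_cube power4_eq_xxxx)
      show ?thesis using a b by (simp add: algebra_simps)
    qed
    finally show "(\<integral>\<^sup>+ w. ?f n w \<partial>lborel) = ennreal (12 * U * (1/2)^n)" .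
  qed
  also have "\<dots> = ennreal (\<Sum>n. 12 * U * (1/2)^n)"
    by (rule suminf_ennreal2) (simp_all add: U0 summable_geometric)
  also have "(\<Sum>n. 12 * U * (1/2::real)^n) = 24 * U"
    using suminf_geometric[of "1/2::real"] by (simp add: suminf_mult)
  finally show ?thesis by (simp add: U_def)
qed


lemma exp_ge_sq4: "(x::real) \<ge> 0 \<Longrightarrow> x^2/4 \<le> exp x"
proof -
  assume x: "x \<ge> 0"
  have "x/2 \<le> exp (x/2)" using exp_ge_add_one_self[of "x/2"] by linarith
  then have "(x/2)^2 \<le> (exp (x/2))^2" using x by (intro power_mono) auto
  also have "(exp (x/2))^2 = exp x" by (simp add: power2_eq_square flip: exp_add)
  finally show ?thesis by (simp add: power_divide)
qed

lemma S3:
  fixes a b \<delta> :: real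
  assumes a: "a > 0" and b: "b > 0" and d: "\<delta> > 0"
  defines "M \<equiv> 1 + 4/\<delta>^2"
  shows "(1+b)/(a*b) * exp (-\<delta>*a^2) \<le> 2*M*(Qf a + Qf b)"
proof -
  define G where "G = exp (-\<delta>*a^2)"
  have G0: "0 < G" "G \<le> 1" unfolding G_def using a d by auto
  have "(\<delta>*a^2)^2/4 \<le> exp (\<delta>*a^2)" using d by (intro exp_ge_sq4) simp
  then have "G * ((\<delta>*a^2)^2/4) \<le> G * exp (\<delta>*a^2)" using G0 by simp
  also have "G * exp (\<delta>*a^2) = 1" by (simp add: G_def flip: exp_add)
  finally have "G * a^4 * (\<delta>^2/4) \<le> 1" by (simp add: power_mult_distrib power2_eq_square power4_eq_xxxx algebra_simps)
  then have G4: "G * a^4 \<le> 4/\<delta>^2" using d by (simp add: field_simps)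
  have M1: "M \<ge> 1" unfolding M_def by simp
  have Qb0: "Qf b \<ge> 0" "Qf a \<ge> 0" using a b by (simp_all add: Qf_nonneg)
  have h1: "G \<le> M * Qf a"
  proof (cases "a < 1")
    case True
    then have "1 \<le> 1/a^2" using a by (simp add: field_simps power_le_one)
    moreover have "1 * (1/a^2) \<le> M * (1/a^2)" using M1 by (intro mult_right_mono) auto
    moreover have "Qf a = 1/a^2" using True a by (simp add: Qf_def)
    ultimately show ?thesis using G0 by simp
  next
    case False
    have "G \<le> (4/\<delta>^2) / a^4" using G4 a by (subst pos_le_divide_eq) auto
    also have "\<dots> \<le> M / a^4" by (intro divide_right_mono) (simp_all add: M_def)
    finally show ?thesis using False a unfolding Qf_def by simp
  qed
  have h2: "G/a^2 \<le> M * Qf a"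
  proof (cases "a < 1")
    case True
    then have "G/a^2 \<le> 1/a^2" using G0 a by (simp add: divide_right_mono)
    also have "\<dots> \<le> M * (1/a^2)" using mult_right_mono[OF M1, of "1/a^2"] by simp
    finally show ?thesis using True a unfolding Qf_def by simp
  next
    case False
    then have "a^2 \<ge> 1" by (simp add: one_le_power)
    then have "G/a^2 \<le> G" using G0 by (simp add: divide_le_eq mult_le_cancel_left1)
    then show ?thesis using h1 by linarith
  qed
  have h3: "G/b^2 \<le> M * Qf a + Qf b"
  proof (cases "b < 1")
    case True
    then have "G/b^2 \<le> 1/b^2" using G0 b by (simp add: divide_right_mono)
    moreover have "Qf b = 1/b^2" using True b by (simp add: Qf_def)
    moreover have "0 \<le> M * Qf a" using M1 Qb0 by simp
    ultimately show ?thesis by linarith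
  next
    case False
    then have "b^2 \<ge> 1" by (simp add: one_le_power)
    then have "G/b^2 \<le> G" using G0 by (simp add: divide_le_eq mult_le_cancel_left1)
    then show ?thesis using h1 Qb0 by linarith
  qed
  define x where "x = 1/a"
  define y where "y = 1/b"
  have "(1+b)/(a*b) = x*y + x" unfolding x_def y_def using a b by (simp add: field_simps)
  also have "\<dots> \<le> (x^2+y^2)/2 + (1+x^2)/2"
    using sum_squares_ge_zero[of "x-y" 0] sum_squares_ge_zero[of "x-1" 0]
    by (simp add: power2_eq_square algebra_simps add_divide_distrib)
  finally have key: "(1+b)/(a*b) \<le> 1/2 + 1/a^2 + 1/(2*b^2)" 
    unfolding x_def y_def by (simp add: power_divide add_divide_distrib)
  have "(1+b)/(a*b) * G \<le> (1/2 + 1/a^2 + 1/(2*b^2)) * G"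
    using key G0 by (intro mult_right_mono) auto
  also have "\<dots> = G/2 + G/a^2 + (G/b^2)/2" by (simp add: field_simps)
  also have "\<dots> \<le> M * Qf a/2 + M*Qf a + (M * Qf a + Qf b)/2" using h1 h2 h3 by (intro add_mono divide_right_mono) auto
  also have "\<dots> = 2*(M*Qf a) + Qf b/2" by (simp add: field_simps)
  also have "\<dots> \<le> 2*(M*Qf a) + 2*(M*Qf b)" using mult_right_mono[OF M1 Qb0(1)] Qb0 by linarith
  also have "\<dots> = 2*M*(Qf a + Qf b)" by (simp add: algebra_simps)
  finally show ?thesis unfolding G_def .
qed


lemma point_real:
  fixes a b nv K C P \<alpha> \<beta> :: real
  assumes a: "a > 0" and b: "b > 0" and K0: "K \<ge> 0" and C0: "C \<ge> 0" and P1: "P \<ge> 1"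
    and al: "0 \<le> \<alpha>" "\<alpha> < 2*\<beta>"
    and nv: "nv^2 - b^2 = u * a"
    and Kb: "K \<le> C * (1 / (a * P)) * exp (- \<beta> * (a^2 + u^2))"
  shows "(1+b)/b * K * exp (-\<alpha>*b^2)
     \<le> C * (2*(1 + 4/(\<beta>-\<alpha>/2)^2)) * exp (-\<alpha>*nv^2) * (Qf a + Qf b)"
proof -
  define \<delta> where "\<delta> = \<beta> - \<alpha>/2"
  have d: "\<delta> > 0" using al unfolding \<delta>_def by simp
  have "1/(a*P) \<le> 1/a" using a P1 by (simp add: frac_le)
  then have "C * (1 / (a * P)) * exp (- \<beta> * (a^2 + u^2)) \<le> C * (1/a) * exp (- \<beta> * (a^2 + u^2))"
    using C0 by (intro mult_right_mono mult_left_mono) auto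
  then have K1: "K \<le> C / a * exp (- \<beta> * (a^2 + u^2))"
    using Kb by simp
  have ex: "- \<beta> * (a^2 + u^2) + (-\<alpha>*b^2) \<le> -\<alpha>*nv^2 + (-\<delta>*a^2)"
  proof -
    have "-\<alpha>*b^2 = -\<alpha>*nv^2 + \<alpha>*(u*a)" using nv by (simp add: algebra_simps)
    moreover have "\<alpha>/2*(u-a)^2 \<ge> 0" "(\<beta>-\<alpha>/2)*u^2 \<ge> 0" using al by auto
    ultimately show ?thesis unfolding \<delta>_def by (simp add: power2_eq_square algebra_simps)
  qed
  have E: "exp (- \<beta> * (a^2 + u^2)) * exp (-\<alpha>*b^2) \<le> exp (-\<alpha>*nv^2) * exp (-\<delta>*a^2)"
    using ex by (simp flip: exp_add)
  have "(1+b)/b * K * exp (-\<alpha>*b^2) \<le> (1+b)/b * (C / a * exp (- \<beta> * (a^2 + u^2))) * exp (-\<alpha>*b^2)"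
    using K1 b by (intro mult_right_mono mult_left_mono) auto
  also have "\<dots> = C * ((1+b)/(a*b)) * (exp (- \<beta> * (a^2 + u^2)) * exp (-\<alpha>*b^2))"
    by (simp add: field_simps)
  also have "\<dots> \<le> C * ((1+b)/(a*b)) * (exp (-\<alpha>*nv^2) * exp (-\<delta>*a^2))"
    using E C0 a b by (intro mult_left_mono) auto
  also have "\<dots> = C * exp (-\<alpha>*nv^2) * ((1+b)/(a*b) * exp (-\<delta>*a^2))" by simp
  also have "\<dots> \<le> C * exp (-\<alpha>*nv^2) * (2*(1 + 4/\<delta>^2)*(Qf a + Qf b))"
    using S3[OF a b d] C0 by (intro mult_left_mono) auto
  finally show ?thesis unfolding \<delta>_def by (simp add: algebra_simps)
qed


lemma Qf_meas: "(\<lambda>w::real^3. ennreal (Qf (norm (w - c)))) \<in> borel_measurable lborel"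
  unfolding Qf_def by measurable

theorem lemma2p1:
  fixes k :: "real^3 \<Rightarrow> real^3 \<Rightarrow> real"
    and \<gamma> \<rho> \<alpha> :: real
  assumes "0 \<le> \<gamma>" "\<gamma> \<le> 1" "0 \<le> \<rho>" "\<rho> < 1"
    and kbound: "\<exists>C\<ge>0. \<forall>v w. v \<noteq> w \<longrightarrow>
        \<bar>k v w\<bar> \<le> C * (1 / (norm (v - w) * (1 + norm v + norm w) powr (1 - \<gamma>)))
          * exp (- ((1 - \<rho>) / 4) * ((norm (v - w))\<^sup>2
                 + ((norm v ^ 2 - norm w ^ 2) / norm (v - w))\<^sup>2))"
    and "0 \<le> \<alpha>" "\<alpha> < (1 - \<rho>) / 2"
  shows "\<exists>C'\<ge>0. \<forall>v::real^3.
     (\<integral>\<^sup>+ w. ennreal ((1 + norm w) / norm w * \<bar>k v w\<bar> * exp (- \<alpha> * (norm w)\<^sup>2)) \<partial>lborel)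
       \<le> ennreal (C' * exp (- \<alpha> * (norm v)\<^sup>2))"
proof -
  obtain C where C0: "C \<ge> 0" and Cb: "\<forall>v w. v \<noteq> w \<longrightarrow>
        \<bar>k v w\<bar> \<le> C * (1 / (norm (v - w) * (1 + norm v + norm w) powr (1 - \<gamma>)))
          * exp (- ((1 - \<rho>) / 4) * ((norm (v - w))\<^sup>2
                 + ((norm v ^ 2 - norm w ^ 2) / norm (v - w))\<^sup>2))" using kbound by blast
  define \<beta> where "\<beta> = (1 - \<rho>) / 4"
  define K where "K = C * (2*(1 + 4/(\<beta>-\<alpha>/2)^2))"
  define S where "S = 24 * unit_ball_vol 3"
  have K0: "K \<ge> 0" unfolding K_def using C0 by (simp add: add_nonneg_nonneg)
  have S0: "S \<ge> 0" unfolding S_def by simp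
  have al: "0 \<le> \<alpha>" "\<alpha> < 2*\<beta>" using assms unfolding \<beta>_def by auto
  show ?thesis
  proof (intro exI[of _ "K * (2*S)"] conjI allI)
    show "0 \<le> K * (2*S)" using K0 S0 by simp
    fix v :: "real^3"
    define e where "e = exp (- \<alpha> * (norm v)\<^sup>2)"
    have e0: "e \<ge> 0" unfolding e_def by simp
    have pt: "ennreal ((1 + norm w) / norm w * \<bar>k v w\<bar> * exp (- \<alpha> * (norm w)\<^sup>2))
        \<le> ennreal (K * e) * (ennreal (Qf (norm (w - v))) + ennreal (Qf (norm (w - 0))))"
      if wv: "w \<noteq> v" for w
    proof (cases "w = 0")
      case True then show ?thesis by simp
    next
      case False
      have a: "norm (v - w) > 0" using wv by simp
      have b: "norm w > 0" using False by simp
      have P1: "(1 + norm v + norm w) powr (1 - \<gamma>) \<ge> 1"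
        using assms by (intro ge_one_powr_ge_zero) auto
      have nv: "(norm v)^2 - (norm w)^2 = ((norm v ^ 2 - norm w ^ 2) / norm (v - w)) * norm (v - w)"
        using a by simp
      have Kb: "\<bar>k v w\<bar> \<le> C * (1 / (norm (v - w) * (1 + norm v + norm w) powr (1 - \<gamma>)))
          * exp (- \<beta> * ((norm (v - w))\<^sup>2
                 + ((norm v ^ 2 - norm w ^ 2) / norm (v - w))\<^sup>2))"
        using Cb wv unfolding \<beta>_def by (metis)
      have r: "(1 + norm w) / norm w * \<bar>k v w\<bar> * exp (- \<alpha> * (norm w)\<^sup>2)
          \<le> K * e * (Qf (norm (w - v)) + Qf (norm (w - 0)))"
        using point_real[OF a b abs_ge_zero C0 P1 al nv Kb]
        unfolding K_def e_def by (simp add: norm_minus_commute mult.assoc)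
      have q: "Qf (norm (w - v)) \<ge> 0" "Qf (norm (w - 0)) \<ge> 0" by (simp_all add: Qf_nonneg)
      have "ennreal ((1 + norm w) / norm w * \<bar>k v w\<bar> * exp (- \<alpha> * (norm w)\<^sup>2))
          \<le> ennreal (K * e * (Qf (norm (w - v)) + Qf (norm (w - 0))))"
        using r by (rule ennreal_leI)
      also have "\<dots> = ennreal (K * e) * (ennreal (Qf (norm (w - v))) + ennreal (Qf (norm (w - 0))))"
        using q K0 e0 by (simp add: ennreal_mult ennreal_plus)
      finally show ?thesis .
    qed
    have "(\<integral>\<^sup>+ w. ennreal ((1 + norm w) / norm w * \<bar>k v w\<bar> * exp (- \<alpha> * (norm w)\<^sup>2)) \<partial>lborel)
       \<le> (\<integral>\<^sup>+ w. ennreal (K * e) * (ennreal (Qf (norm (w - v))) + ennreal (Qf (norm (w - 0)))) \<partial>lborel)"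
      apply (rule nn_integral_mono_AE)
      apply (rule AE_mp[OF AE_lborel_singleton[of v]])
      apply (rule AE_I2)
      using pt by blast
    also have "\<dots> = ennreal (K * e) * ((\<integral>\<^sup>+ w. ennreal (Qf (norm (w - v))) \<partial>lborel)
          + (\<integral>\<^sup>+ w. ennreal (Qf (norm ((w::real^3) - 0))) \<partial>lborel))"
    proof -
      have m1: "(\<lambda>w. ennreal (Qf (norm (w - v)))) \<in> borel_measurable lborel" by (rule Qf_meas)
      have m0: "(\<lambda>w::real^3. ennreal (Qf (norm (w - 0)))) \<in> borel_measurable lborel" by (rule Qf_meas)
      show ?thesis
        by (subst nn_integral_cmult[OF borel_measurable_add[OF m1 m0]]) (simp only: nn_integral_add[OF m1 m0])
    qed
    also have "\<dots> \<le> ennreal (K * e) * (ennreal S + ennreal S)"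
      unfolding S_def by (intro mult_left_mono add_mono Qf_int) auto
    also have "\<dots> = ennreal (K * (2*S) * e)"
      using K0 e0 S0 by (simp add: ennreal_mult[symmetric] ennreal_plus[symmetric] del: ennreal_plus) 
    finally show "(\<integral>\<^sup>+ w. ennreal ((1 + norm w) / norm w * \<bar>k v w\<bar> * exp (- \<alpha> * (norm w)\<^sup>2)) \<partial>lborel)
       \<le> ennreal (K * (2*S) * exp (- \<alpha> * (norm v)\<^sup>2))" unfolding e_def .
  qed
qed

end
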